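(* Under Assumptions (A1)–(A4), $\sum_{\mathbf k\in\mathbb N^d}\sqrt{\pi_0(\mathbf k)}<\infty$. Moreover, for every $p\in[1,\infty]$, $\ell_p(\overline\pi_n,\pi_0)=O_{\mathbb P}(1/\sqrt n)$, where $\overline\pi_n(\mathbf k)=\frac1n\sum_{i=1}^n\mathbb I\{\mathbf X_i=\mathbf k\}$ is the empirical estimator based on i.i.d. $\mathbf X_1,\dots,\mathbf X_n\sim\pi_0$.
   Context: Let $b_k>0$ for all $k\in\mathbb N=\{0,1,2,\dots\}$, $b(\theta)=\sum_{k\ge0}b_k\theta^k$ with radius of convergence $R\in(0,\infty]$, $\mathcal T=[0,R]$ if $b(R)<\infty$ and $\mathcal T=[0,R)$ if $b(R)=\infty$, $f_\theta(k)=b_k\theta^k/b(\theta)$. Fix $d\ge1$, $\Theta=\mathcal T^d$, $\pi_0(\mathbf k)=\int_\Theta\prod_{j=1}^d f_{\theta_j}(k_j)\,dQ_0(\boldsymbol\theta)$ for a probability measure $Q_0$ on $\Theta$. $\ell_p(\pi_1,\pi_2)=(\sum_{\mathbf k}|\pi_1(\mathbf k)-\pi_2(\mathbf k)|^p)^{1/p}$ for $p<\infty$ and $\sup_{\mathbf k}|\pi_1(\mathbf k)-\pi_2(\mathbf k)|$ for $p=\infty$. Assumptions: (A1) If $R<\infty$, there is $q_0\in(0,1)$ with $\mathrm{supp}\,Q_0\subseteq[0,q_0R]^d$; if $R=\infty$, there is $M>0$ with $\mathrm{supp}\,Q_0\subseteq[0,M]^d$. (A2) If $Q_0(\{(0,\dots,0)\})>0$,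 there exist $\eta_0\in(0,1)$, $\delta_0\in(0,R)$ with $Q_0(\{(0,\dots,0)\})\le1-\eta_0$ and $\mathrm{supp}\,Q_0\cap\bigcup_{j}\{\boldsymbol\theta:\theta_j\in(0,\delta_0)\}=\varnothing$; if $Q_0(\{(0,\dots,0)\})=0$, there is $\delta_0\in(0,R)$ with the same support condition. (A3) There is $V\in\mathbb N$ with $b_k/b_0\ge k^{-k}$ for $k\ge V$. (A4) $\lim_{k\to\infty}b_{k+1}/b_k$ exists in $[0,\infty)$. *)

theory Defs
  imports "HOL-Probability.Probability"
begin

definition bfun :: "(nat \<Rightarrow> real) \<Rightarrow> real \<Rightarrow> real" where
  "bfun b \<theta> = (\<Sum>k. b k * \<theta> ^ k)"

definition Tset :: "(nat \<Rightarrow> real) \<Rightarrow> real set" where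
  "Tset b = {\<theta>. 0 \<le> \<theta> \<and> (ereal \<theta> < conv_radius b \<or>
       (ereal \<theta> = conv_radius b \<and> summable (\<lambda>k. b k * \<theta> ^ k)))}"

definition fps_dist :: "(nat \<Rightarrow> real) \<Rightarrow> real \<Rightarrow> nat \<Rightarrow> real" where
  "fps_dist b \<theta> k = b k * \<theta> ^ k / bfun b \<theta>"

definition pi_mix :: "(nat \<Rightarrow> real) \<Rightarrow> (real ^ 'd) measure \<Rightarrow> ('d::finite \<Rightarrow> nat) \<Rightarrow> real" where
  "pi_mix b Q k = (\<integral>\<theta>. (\<Prod>j\<in>UNIV. fps_dist b (\<theta> $ j) (k j)) \<partial>Q)"

definition msupp :: "'a::topological_space measure \<Rightarrow> 'a set" where
  "msupp M = {x. \<forall>U. open U \<and> x \<in> U \<longrightarrow> emeasure M U > 0}"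

definition lp_dist :: "ereal \<Rightarrow> ('k \<Rightarrow> real) \<Rightarrow> ('k \<Rightarrow> real) \<Rightarrow> real" where
  "lp_dist p \<pi>1 \<pi>2 =
     (if p = \<infinity> then (SUP k. \<bar>\<pi>1 k - \<pi>2 k\<bar>)
      else (\<Sum>\<^sub>\<infinity>k. \<bar>\<pi>1 k - \<pi>2 k\<bar> powr real_of_ereal p) powr (1 / real_of_ereal p))"

definition emp_pmf :: "(nat \<Rightarrow> 'a \<Rightarrow> 'k) \<Rightarrow> nat \<Rightarrow> 'a \<Rightarrow> 'k \<Rightarrow> real" where
  "emp_pmf X n \<omega> k = real (card {i. i < n \<and> X i \<omega> = k}) / real n"

end

theory Submission
  imports Defs
begin

lemma supp_AE:
  fixes Q :: "'a::second_countable_topology measure"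
  assumes sQ: "sets Q = sets borel"
  shows "AE x in Q. x \<in> msupp Q"
proof -
  define F where "F = {U::'a set. open U \<and> emeasure Q U = 0}"
  obtain F' where F': "F' \<subseteq> F" "countable F'" "\<Union>F' = \<Union>F"
    using Lindelof[of F] unfolding F_def by blast
  have "(\<Union>U\<in>F'. U) \<in> null_sets Q"
  proof (rule null_sets_UN')
    show "countable F'" by fact
    fix U assume "U \<in> F'"
    then have "open U" "emeasure Q U = 0" using F' F_def by auto
    then show "U \<in> null_sets Q" using sQ by (auto simp: null_sets_def)
  qed
  moreover have "{x\<in>space Q. \<not> x \<in> msupp Q} \<subseteq> (\<Union>U\<in>F'. U)"
  proof
    fix x assume "x \<in> {x\<in>space Q. \<not> x \<in> msupp Q}"
    then obtain U where "open U" "x \<in> U" "\<not> emeasure Q U > 0" unfolding msupp_def by auto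
    then have "U \<in> F" unfolding F_def by (auto simp: zero_less_iff_neq_zero)
    then show "x \<in> (\<Union>U\<in>F'. U)" using F'(3) \<open>x \<in> U\<close> by auto
  qed
  ultimately show ?thesis by (rule AE_I')
qed

lemma bfun_props:
  fixes b :: "nat \<Rightarrow> real"
  assumes b_pos: "\<And>k. b k > 0" and th: "0 \<le> \<theta>" "ereal \<theta> < conv_radius b"
  shows "summable (\<lambda>k. b k * \<theta> ^ k)" "b k * \<theta> ^ k \<le> bfun b \<theta>" "b 0 \<le> bfun b \<theta>"
proof -
  show s: "summable (\<lambda>k. b k * \<theta> ^ k)"
    using th by (intro summable_in_conv_radius) auto
  have nn: "\<And>n. 0 \<le> b n * \<theta> ^ n" using b_pos th by (simp add: less_imp_le)
  have "sum (\<lambda>k. b k * \<theta> ^ k) {k} \<le> bfun b \<theta>" for k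
    unfolding bfun_def by (rule sum_le_suminf[OF s]) (use nn in auto)
  then have all: "b k * \<theta> ^ k \<le> bfun b \<theta>" for k by simp
  then show "b k * \<theta> ^ k \<le> bfun b \<theta>" .
  from all[of 0] show "b 0 \<le> bfun b \<theta>" by simp
qed

lemma fps_bounds:
  fixes b :: "nat \<Rightarrow> real"
  assumes b_pos: "\<And>k. b k > 0" and th: "0 \<le> \<theta>" "\<theta> \<le> \<rho>" "ereal \<rho> < conv_radius b"
  shows "0 \<le> fps_dist b \<theta> k" "fps_dist b \<theta> k \<le> 1" "fps_dist b \<theta> k \<le> b k * \<rho> ^ k / b 0"
proof -
  have th': "ereal \<theta> < conv_radius b" using th by (meson ereal_less_eq(3) order.strict_trans1)
  note bp = bfun_props[OF b_pos th(1) th']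
  have pos: "bfun b \<theta> > 0" using bp(3) b_pos[of 0] by linarith
  show "0 \<le> fps_dist b \<theta> k" unfolding fps_dist_def using pos b_pos[of k] th by simp
  show "fps_dist b \<theta> k \<le> 1" unfolding fps_dist_def using pos bp(2)[of k] by simp
  have "b k * \<theta> ^ k \<le> b k * \<rho> ^ k" using b_pos[of k] th by (simp add: power_mono)
  moreover have "b k * \<theta> ^ k / bfun b \<theta> \<le> b k * \<theta> ^ k / b 0"
    using b_pos th bp(3) pos by (intro divide_left_mono) (auto simp: less_imp_le)
  ultimately show "fps_dist b \<theta> k \<le> b k * \<rho> ^ k / b 0" unfolding fps_dist_def
    using b_pos[of 0] by (smt (verit) divide_right_mono)
qed

lemma integral_le_const_AE:
  fixes f :: "'a \<Rightarrow> real"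
  assumes "prob_space Q" "AE x in Q. f x \<le> c" "0 \<le> c"
  shows "integral\<^sup>L Q f \<le> c"
proof (cases "integrable Q f")
  case True
  have "integral\<^sup>L Q f \<le> integral\<^sup>L Q (\<lambda>_. c)"
    using True assms by (intro integral_mono_AE) (auto simp: prob_space.finite_measure finite_measure.integrable_const)
  also have "\<dots> = c" using assms(1) by (simp add: prob_space.prob_space)
  finally show ?thesis .
next
  case False then show ?thesis using assms by (simp add: not_integrable_integral_eq)
qed

lemma pi_bounds:
  fixes b :: "nat \<Rightarrow> real" and Q :: "(real ^ 'd::finite) measure"
  assumes b_pos: "\<And>k. b k > 0" and Q: "prob_space Q"
    and AE: "AE \<theta> in Q. \<forall>j. 0 \<le> \<theta> $ j \<and> \<theta> $ j \<le> \<rho>" and r: "ereal \<rho> < conv_radius b" and r0: "0 \<le> \<rho>"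
  shows "0 \<le> pi_mix b Q k" "pi_mix b Q k \<le> 1"
    "pi_mix b Q k \<le> (\<Prod>j\<in>UNIV. b (k j) * \<rho> ^ (k j) / b 0)"
proof -
  note fb = fps_bounds[OF b_pos _ _ r]
  show "0 \<le> pi_mix b Q k" unfolding pi_mix_def
    by (rule integral_nonneg_AE) (use AE in \<open>eventually_elim, auto intro!: prod_nonneg fb(1)\<close>)
  show "pi_mix b Q k \<le> 1" unfolding pi_mix_def
    by (rule integral_le_const_AE[OF Q]) (use AE in \<open>eventually_elim, auto intro!: prod_le_1 fb(1,2)\<close>)
  show "pi_mix b Q k \<le> (\<Prod>j\<in>UNIV. b (k j) * \<rho> ^ (k j) / b 0)" unfolding pi_mix_def
  proof (rule integral_le_const_AE[OF Q])
    show "AE x in Q. (\<Prod>j\<in>UNIV. fps_dist b (x $ j) (k j)) \<le> (\<Prod>j\<in>UNIV. b (k j) * \<rho> ^ (k j) / b 0)"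
      using AE by eventually_elim (auto intro!: prod_mono fb(1,3))
    show "0 \<le> (\<Prod>j\<in>UNIV. b (k j) * \<rho> ^ (k j) / b 0)"
      using b_pos r0 by (auto intro!: prod_nonneg simp: less_imp_le)
  qed
qed

lemma get_rho:
  fixes b :: "nat \<Rightarrow> real" and Q0 :: "(real ^ 'd::finite) measure"
  assumes R_pos: "conv_radius b > 0"
    and Q0_sets: "sets Q0 = sets borel"
    and A1: "(\<forall>r. conv_radius b = ereal r \<longrightarrow>
               (\<exists>q0. 0 < q0 \<and> q0 < 1 \<and>
                  msupp Q0 \<subseteq> {\<theta>. \<forall>j. 0 \<le> \<theta> $ j \<and> \<theta> $ j \<le> q0 * r}))
           \<and> (conv_radius b = \<infinity> \<longrightarrow>
               (\<exists>M>0. msupp Q0 \<subseteq> {\<theta>. \<forall>j. 0 \<le> \<theta> $ j \<and> \<theta> $ j \<le> M}))"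
  obtains \<rho> where "0 \<le> \<rho>" "ereal \<rho> < conv_radius b" "AE \<theta> in Q0. \<forall>j. 0 \<le> \<theta> $ j \<and> \<theta> $ j \<le> \<rho>"
proof -
  have "\<exists>\<rho>. 0 \<le> \<rho> \<and> ereal \<rho> < conv_radius b \<and> msupp Q0 \<subseteq> {\<theta>. \<forall>j. 0 \<le> \<theta> $ j \<and> \<theta> $ j \<le> \<rho>}"
  proof (cases "conv_radius b")
    case (real r)
    then have r: "r > 0" using R_pos by simp
    obtain q0 where q: "0 < q0" "q0 < 1" "msupp Q0 \<subseteq> {\<theta>. \<forall>j. 0 \<le> \<theta> $ j \<and> \<theta> $ j \<le> q0 * r}"
      using A1 real by blast
    have "q0 * r < r" using q r by simp
    then show ?thesis using q r real by (intro exI[of _ "q0 * r"]) auto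
  next
    case PInf
    then obtain M where "M > 0" "msupp Q0 \<subseteq> {\<theta>. \<forall>j. 0 \<le> \<theta> $ j \<and> \<theta> $ j \<le> M}"
      using A1 by blast
    then show ?thesis using PInf by (intro exI[of _ M]) auto
  next
    case MInf then show ?thesis using R_pos by simp
  qed
  then obtain \<rho> where r: "0 \<le> \<rho>" "ereal \<rho> < conv_radius b"
    "msupp Q0 \<subseteq> {\<theta>. \<forall>j. 0 \<le> \<theta> $ j \<and> \<theta> $ j \<le> \<rho>}" by blast
  have "AE \<theta> in Q0. \<forall>j. 0 \<le> \<theta> $ j \<and> \<theta> $ j \<le> \<rho>"
    using supp_AE[OF Q0_sets] by eventually_elim (use r(3) in auto)
  then show ?thesis using r that by blast
qed

lemma h_summable:
  fixes b :: "nat \<Rightarrow> real"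
  assumes b_pos: "\<And>k. b k > 0" and r: "0 \<le> \<rho>" "ereal \<rho> < conv_radius b"
  shows "(\<lambda>m. sqrt (b m * \<rho> ^ m / b 0)) summable_on UNIV"
proof -
  obtain \<rho>' where r': "ereal \<rho> < ereal \<rho>'" "ereal \<rho>' < conv_radius b" using ereal_dense2[OF r(2)] by blast
  then have rr: "\<rho> < \<rho>'" "0 < \<rho>'" using r by auto
  have s: "summable (\<lambda>k. b k * \<rho>' ^ k)" using r' rr by (intro summable_in_conv_radius) auto
  obtain B where B: "B > 0" "\<And>k. norm (b k * \<rho>' ^ k) \<le> B"
    using summable_imp_Bseq[OF s] unfolding Bseq_def by blast
  define c where "c = sqrt (\<rho> / \<rho>')"
  have c: "0 \<le> c" "c < 1" using rr r by (auto simp: c_def)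
  have bound: "sqrt (b m * \<rho> ^ m / b 0) \<le> sqrt (B / b 0) * c ^ m" for m
  proof -
    have "b m * \<rho> ^ m = (b m * \<rho>' ^ m) * (\<rho> / \<rho>') ^ m"
      using rr by (simp add: power_divide)
    also have "\<dots> \<le> B * (\<rho> / \<rho>') ^ m"
      using B(2)[of m] b_pos[of m] rr r by (intro mult_right_mono) auto
    finally have "b m * \<rho> ^ m / b 0 \<le> B / b 0 * (\<rho> / \<rho>') ^ m"
      using b_pos[of 0] by (simp add: divide_right_mono)
    then have "sqrt (b m * \<rho> ^ m / b 0) \<le> sqrt (B / b 0 * (\<rho> / \<rho>') ^ m)"
      by (rule real_sqrt_le_mono)
    also have "\<dots> = sqrt (B / b 0) * c ^ m"
      unfolding c_def by (simp only: real_sqrt_mult real_sqrt_power)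
    finally show ?thesis .
  qed
  have "summable (\<lambda>m. sqrt (b m * \<rho> ^ m / b 0))"
  proof (rule summable_comparison_test)
    show "\<exists>N. \<forall>n\<ge>N. norm (sqrt (b n * \<rho> ^ n / b 0)) \<le> sqrt (B / b 0) * c ^ n"
      using bound b_pos r by (auto simp: less_imp_le)
    show "summable (\<lambda>n. sqrt (B / b 0) * c ^ n)"
      using c by (intro summable_mult summable_geometric) auto
  qed
  then show ?thesis
    by (rule summable_nonneg_imp_summable_on) (use b_pos r in \<open>auto simp: less_imp_le\<close>)
qed

lemma prod_summable:
  fixes h :: "nat \<Rightarrow> real"
  assumes "h summable_on UNIV"
  shows "(\<lambda>k::'d::finite \<Rightarrow> nat. \<Prod>j\<in>UNIV. h (k j)) summable_on UNIV"
proof -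
  have eq: "\<And>f::_\<Rightarrow>real. \<And>A. f summable_on A \<longleftrightarrow> Infinite_Set_Sum.abs_summable_on f A"
    by (rule trans[OF summable_on_iff_abs_summable_on_real abs_summable_equivalent])
  have "Infinite_Set_Sum.abs_summable_on h UNIV"
    using assms eq[THEN iffD1] by blast
  then have "Infinite_Set_Sum.abs_summable_on (\<lambda>k::'d \<Rightarrow> nat. \<Prod>j\<in>UNIV. h (k j)) (PiE UNIV (\<lambda>_. UNIV))"
    by (intro abs_summable_on_prod_PiE) auto
  moreover have "PiE UNIV (\<lambda>_::'d. UNIV::nat set) = UNIV" by (auto simp: PiE_def extensional_def Pi_def)
  ultimately show ?thesis using eq[THEN iffD2] by metis
qed

lemma sqrt_prod: "sqrt (prod f A) = prod (\<lambda>x. sqrt (f x)) A"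
  by (induction A rule: infinite_finite_induct) (auto simp: real_sqrt_mult)

lemma part1:
  fixes b :: "nat \<Rightarrow> real" and Q :: "(real ^ 'd::finite) measure"
  assumes b_pos: "\<And>k. b k > 0" and Q: "prob_space Q"
    and AE: "AE \<theta> in Q. \<forall>j. 0 \<le> \<theta> $ j \<and> \<theta> $ j \<le> \<rho>" and r: "ereal \<rho> < conv_radius b" and r0: "0 \<le> \<rho>"
  shows "(\<lambda>k. sqrt (pi_mix b Q k)) summable_on UNIV"
proof (rule summable_on_comparison_test)
  let ?h = "\<lambda>m. sqrt (b m * \<rho> ^ m / b 0)"
  show "(\<lambda>k::'d \<Rightarrow> nat. \<Prod>j\<in>UNIV. ?h (k j)) summable_on UNIV"
    by (rule prod_summable[OF h_summable[OF b_pos r0 r]])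
  fix k :: "'d \<Rightarrow> nat"
  note pb = pi_bounds[OF b_pos Q AE r r0, of k]
  show "0 \<le> sqrt (pi_mix b Q k)" using pb by simp
  have "sqrt (pi_mix b Q k) \<le> sqrt (\<Prod>j\<in>UNIV. b (k j) * \<rho> ^ (k j) / b 0)"
    using pb by (intro real_sqrt_le_mono) auto
  also have "\<dots> = (\<Prod>j\<in>UNIV. ?h (k j))" by (simp add: sqrt_prod)
  finally show "sqrt (pi_mix b Q k) \<le> (\<Prod>j\<in>UNIV. ?h (k j))" .
qed

lemma lp_le:
  fixes d1 d2 :: "'k \<Rightarrow> real"
  assumes p: "1 \<le> p" and bnd: "\<And>F. finite F \<Longrightarrow> (\<Sum>k\<in>F. \<bar>d1 k - d2 k\<bar>) \<le> B"
  shows "lp_dist p d1 d2 \<le> B"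
proof -
  define d where "d k = \<bar>d1 k - d2 k\<bar>" for k
  have d0: "d k \<ge> 0" for k by (simp add: d_def)
  have dB: "d k \<le> B" for k using bnd[of "{k}"] by (simp add: d_def)
  have B0: "0 \<le> B" using bnd[of "{}"] by simp
  show ?thesis
  proof (cases "p = \<infinity>")
    case True
    then show ?thesis unfolding lp_dist_def using dB by (simp add: d_def cSUP_least)
  next
    case False
    define q where "q = real_of_ereal p"
    have q1: "1 \<le> q" using p False unfolding q_def
      by (cases p) auto
    have "infsum (\<lambda>k. d k powr q) UNIV \<le> B powr q"
    proof (cases "(\<lambda>k. d k powr q) summable_on UNIV")
      case True
      show ?thesis
      proof (rule infsum_le_finite_sums[OF True])
        fix F :: "'k set" assume F: "finite F"
        show "sum (\<lambda>k. d k powr q) F \<le> B powr q"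
        proof (cases "B = 0")
          case True
          then have "d k = 0" for k using dB[of k] d0[of k] by simp
          then show ?thesis by simp
        next
          case False
          then have Bp: "B > 0" using B0 by simp
          have "d k powr q \<le> B powr (q - 1) * d k" for k
          proof (cases "d k = 0")
            case True then show ?thesis by simp
          next
            case False
            then have dp: "d k > 0" using d0[of k] by simp
            have "d k powr q = d k powr (q - 1) * d k"
              using dp by (simp add: powr_diff)
            also have "\<dots> \<le> B powr (q - 1) * d k"
              using dp dB[of k] q1 by (intro mult_right_mono powr_mono2) auto
            finally show ?thesis .
          qed
          then have "sum (\<lambda>k. d k powr q) F \<le> sum (\<lambda>k. B powr (q - 1) * d k) F"
            by (rule sum_mono)
          also have "\<dots> = B powr (q - 1) * sum d F" by (simp add: sum_distrib_left)
          also have "\<dots> \<le> B powr (q - 1) * B"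
            using bnd[OF F] by (intro mult_left_mono) (auto simp: d_def)
          also have "\<dots> = B powr q" using Bp by (simp add: powr_diff)
          finally show ?thesis .
        qed
      qed
    next
      case False
      then show ?thesis by (simp add: infsum_not_exists)
    qed
    moreover have "0 \<le> infsum (\<lambda>k. d k powr q) UNIV" by (intro infsum_nonneg) auto
    ultimately have "infsum (\<lambda>k. d k powr q) UNIV powr (1 / q) \<le> (B powr q) powr (1 / q)"
      using q1 by (intro powr_mono2) auto
    also have "\<dots> = B" using q1 B0 by (simp add: powr_powr)
    finally show ?thesis unfolding lp_dist_def using False by (simp add: d_def q_def)
  qed
qed

lemma emp_event_meas:
  fixes X :: "nat \<Rightarrow> 'a \<Rightarrow> 'k::countable"
  assumes Xm: "\<And>i. X i \<in> measurable M (count_space UNIV)"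
  shows "{\<omega>\<in>space M. P (emp_pmf X n \<omega>)} \<in> sets M"
proof -
  define G where "G \<omega> = map (\<lambda>i. X i \<omega>) [0..<n]" for \<omega>
  have Xs: "{\<omega>\<in>space M. X i \<omega> = c} \<in> sets M" for i c
  proof -
    have "{\<omega>\<in>space M. X i \<omega> = c} = X i -` {c} \<inter> space M" by auto
    then show ?thesis using measurable_sets[OF Xm[of i], of "{c}"] by simp
  qed
  have G: "G \<in> measurable M (count_space UNIV)"
    unfolding measurable_count_space_eq2_countable
  proof safe
    fix xs :: "'k list"
    have Gl: "length (G \<omega>) = n" and Gn: "\<And>i. i < n \<Longrightarrow> G \<omega> ! i = X i \<omega>" for \<omega>
      by (simp_all add: G_def)
    have "G -` {xs} \<inter> space M = {\<omega>\<in>space M. length xs = n \<and> (\<forall>i\<in>{..<n}. X i \<omega> = xs ! i)}"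
      by (auto simp: list_eq_iff_nth_eq Gl Gn)
    also have "\<dots> \<in> sets M"
      by (intro sets.sets_Collect_conj sets.sets_Collect_finite_All sets.sets_Collect_const Xs) auto
    finally show "G -` {xs} \<inter> space M \<in> sets M" .
  qed simp
  define E where "E xs = (\<lambda>k. real (card {i. i < n \<and> xs ! i = k}) / real n)" for xs :: "'k list"
  have "emp_pmf X n \<omega> = E (G \<omega>)" for \<omega>
  proof -
    have "{i. i < n \<and> G \<omega> ! i = k} = {i. i < n \<and> X i \<omega> = k}" for k
      by (auto simp: G_def)
    then show ?thesis by (auto simp: emp_pmf_def E_def)
  qed
  then have "{\<omega>\<in>space M. P (emp_pmf X n \<omega>)} = G -` {xs. P (E xs)} \<inter> space M" by auto
  also have "\<dots> \<in> sets M" using measurable_sets[OF G, of "{xs. P (E xs)}"] by simp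
  finally show ?thesis .
qed

lemma (in prob_space) abs_exp_le:
  fixes Y :: "'a \<Rightarrow> real"
  assumes "integrable M Y" "integrable M (\<lambda>x. (Y x)\<^sup>2)"
  shows "expectation (\<lambda>x. \<bar>Y x\<bar>) \<le> sqrt (expectation (\<lambda>x. (Y x)\<^sup>2))"
proof -
  have i1: "integrable M (\<lambda>x. \<bar>Y x\<bar>)" using assms by auto
  have i2: "integrable M (\<lambda>x. (\<bar>Y x\<bar>)\<^sup>2)" using assms by simp
  have "0 \<le> variance (\<lambda>x. \<bar>Y x\<bar>)" by (intro integral_nonneg_AE) auto
  also have "\<dots> = expectation (\<lambda>x. (Y x)\<^sup>2) - (expectation (\<lambda>x. \<bar>Y x\<bar>))\<^sup>2"
    using variance_eq[OF i1 i2] by simp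
  finally have "(expectation (\<lambda>x. \<bar>Y x\<bar>))\<^sup>2 \<le> expectation (\<lambda>x. (Y x)\<^sup>2)" by simp
  then show ?thesis by (simp add: real_le_rsqrt)
qed

lemma card_sum_ind: "real (card {i. i < (n::nat) \<and> P i}) = (\<Sum>i<n. if P i then 1 else 0)"
proof -
  have "{i. i < n \<and> P i} = {i\<in>{..<n}. P i}" by auto
  then have "real (card {i. i < n \<and> P i}) = (\<Sum>i\<in>{i\<in>{..<n}. P i}. 1)" by simp
  also have "\<dots> = (\<Sum>i<n. if P i then 1 else 0)"
    using sum.inter_filter[of "{..<n}" "\<lambda>_. (1::real)" P] by simp
  finally show ?thesis .
qed

context prob_space
begin

lemma var_emp:
  fixes X :: "nat \<Rightarrow> 'a \<Rightarrow> 'k" and c :: real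
  assumes Xm: "\<And>i. X i \<in> measurable M (count_space UNIV)"
    and PX: "\<And>i. prob (X i -` {k} \<inter> space M) = c"
    and PXX: "\<And>i j. i \<noteq> j \<Longrightarrow> prob ((X i -` {k} \<inter> space M) \<inter> (X j -` {k} \<inter> space M)) = c^2"
    and n: "n \<ge> 1"
  shows "integrable M (\<lambda>\<omega>. emp_pmf X n \<omega> k - c)"
    "integrable M (\<lambda>\<omega>. (emp_pmf X n \<omega> k - c)\<^sup>2)"
    "expectation (\<lambda>\<omega>. (emp_pmf X n \<omega> k - c)\<^sup>2) \<le> c / n"
proof -
  define A where "A i = X i -` {k} \<inter> space M" for i
  have A: "A i \<in> events" for i unfolding A_def by (rule measurable_sets[OF Xm]) simp
  have intI: "integrable M (indicator B :: 'a \<Rightarrow> real)" if "B \<in> events" for B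
    using that by (intro integrable_real_indicator) (auto simp: less_top[symmetric])
  have AA: "A i \<inter> A j \<in> events" for i j using A by auto
  define Y where "Y i \<omega> = indicator (A i) \<omega> - c" for i \<omega>
  define D where "D \<omega> = (\<Sum>i<n. Y i \<omega>) / n" for \<omega>
  have Deq: "emp_pmf X n \<omega> k - c = D \<omega>" if "\<omega> \<in> space M" for \<omega>
  proof -
    have "real (card {i. i < n \<and> X i \<omega> = k}) = (\<Sum>i<n. indicator (A i) \<omega>)"
      unfolding card_sum_ind using that by (intro sum.cong) (auto simp: A_def indicator_def)
    then show ?thesis using n
      by (simp add: emp_pmf_def D_def Y_def sum_subtractf field_simps)
  qed
  have YY: "Y i \<omega> * Y j \<omega> = indicator (A i \<inter> A j) \<omega> - c * indicator (A i) \<omega> - c * indicator (A j) \<omega> + c^2" for i j \<omega>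
    by (simp add: Y_def indicator_inter_arith algebra_simps power2_eq_square)
  have intY: "integrable M (\<lambda>\<omega>. Y i \<omega>)" for i
    unfolding Y_def using intI[OF A] by (intro Bochner_Integration.integrable_diff) auto
  have intYY: "integrable M (\<lambda>\<omega>. Y i \<omega> * Y j \<omega>)" for i j
    unfolding YY using intI[OF A] intI[OF AA] by (intro Bochner_Integration.integrable_diff Bochner_Integration.integrable_add integrable_mult_right) auto
  have EYY: "expectation (\<lambda>\<omega>. Y i \<omega> * Y j \<omega>) = (if i = j then c - c^2 else 0)" for i j
  proof -
    have "expectation (\<lambda>\<omega>. Y i \<omega> * Y j \<omega>) = prob (A i \<inter> A j) - c * prob (A i) - c * prob (A j) + c^2"
      unfolding YY using A AA intI[OF A] intI[OF AA] by (simp add: prob_space)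
    also have "\<dots> = (if i = j then c - c^2 else 0)"
      using PX PXX unfolding A_def by (auto simp: power2_eq_square)
    finally show ?thesis .
  qed
  have Dsq: "(D \<omega>)\<^sup>2 = (\<Sum>i<n. \<Sum>j<n. Y i \<omega> * Y j \<omega>) / n^2" for \<omega>
    by (simp add: D_def power2_eq_square sum_product power_divide)
  have intD: "integrable M D" unfolding D_def using intY by auto
  have intD2: "integrable M (\<lambda>\<omega>. (D \<omega>)\<^sup>2)" unfolding Dsq using intYY by auto
  have "integrable M (\<lambda>\<omega>. emp_pmf X n \<omega> k - c) \<longleftrightarrow> integrable M D"
    by (rule Bochner_Integration.integrable_cong[OF refl]) (simp add: Deq)
  then show "integrable M (\<lambda>\<omega>. emp_pmf X n \<omega> k - c)" using intD by simp
  have "integrable M (\<lambda>\<omega>. (emp_pmf X n \<omega> k - c)\<^sup>2) \<longleftrightarrow> integrable M (\<lambda>\<omega>. (D \<omega>)\<^sup>2)"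
    by (rule Bochner_Integration.integrable_cong[OF refl]) (simp add: Deq)
  then show "integrable M (\<lambda>\<omega>. (emp_pmf X n \<omega> k - c)\<^sup>2)" using intD2 by simp
  have "expectation (\<lambda>\<omega>. (emp_pmf X n \<omega> k - c)\<^sup>2) = expectation (\<lambda>\<omega>. (D \<omega>)\<^sup>2)"
    by (rule Bochner_Integration.integral_cong) (simp_all add: Deq)
  also have "\<dots> = (\<Sum>i<n. \<Sum>j<n. expectation (\<lambda>\<omega>. Y i \<omega> * Y j \<omega>)) / n^2"
    unfolding Dsq using intYY by (simp add: Bochner_Integration.integral_sum)
  also have "\<dots> = (n * (c - c^2)) / n^2"
    unfolding EYY by (simp add: sum.delta)
  also have "\<dots> = (c - c^2) / n" using n by (simp add: power2_eq_square)
  also have "\<dots> \<le> c / n" using n by (intro divide_right_mono) auto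
  finally show "expectation (\<lambda>\<omega>. (emp_pmf X n \<omega> k - c)\<^sup>2) \<le> c / n" .
qed

end

context prob_space
begin

lemma main_bound:
  fixes X :: "nat \<Rightarrow> 'a \<Rightarrow> 'k::countable" and \<pi> :: "'k \<Rightarrow> real"
  assumes Xm: "\<And>i. X i \<in> measurable M (count_space UNIV)"
    and PX: "\<And>i k. prob (X i -` {k} \<inter> space M) = \<pi> k"
    and PXX: "\<And>i j k. i \<noteq> j \<Longrightarrow> prob ((X i -` {k} \<inter> space M) \<inter> (X j -` {k} \<inter> space M)) = (\<pi> k)^2"
    and pi0: "\<And>k. 0 \<le> \<pi> k"
    and summ: "(\<lambda>k. sqrt (\<pi> k)) summable_on UNIV"
    and p: "1 \<le> p" and n: "n \<ge> 1" and C: "C > 0"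
  shows "emeasure M {\<omega>\<in>space M. lp_dist p (emp_pmf X n \<omega>) \<pi> > C / sqrt n}
           \<le> ennreal (infsum (\<lambda>k. sqrt (\<pi> k)) UNIV / C)"
proof -
  define t where "t = C / sqrt n"
  have t: "t > 0" using C n by (simp add: t_def)
  define E where "E = {\<omega>\<in>space M. lp_dist p (emp_pmf X n \<omega>) \<pi> > t}"
  have E: "E \<in> events" unfolding E_def by (rule emp_event_meas[OF Xm])
  define f where "f k \<omega> = ennreal (\<bar>emp_pmf X n \<omega> k - \<pi> k\<bar> / t)" for k \<omega>
  have ve: "integrable M (\<lambda>\<omega>. emp_pmf X n \<omega> k - \<pi> k)"
    "integrable M (\<lambda>\<omega>. (emp_pmf X n \<omega> k - \<pi> k)\<^sup>2)"
    "expectation (\<lambda>\<omega>. (emp_pmf X n \<omega> k - \<pi> k)\<^sup>2) \<le> \<pi> k / n" for k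
  proof -
    note v = var_emp[where c="\<pi> k" and k=k, OF Xm PX PXX n]
    show "integrable M (\<lambda>\<omega>. emp_pmf X n \<omega> k - \<pi> k)" by (rule v(1))
    show "integrable M (\<lambda>\<omega>. (emp_pmf X n \<omega> k - \<pi> k)\<^sup>2)" by (rule v(2))
    show "expectation (\<lambda>\<omega>. (emp_pmf X n \<omega> k - \<pi> k)\<^sup>2) \<le> \<pi> k / n" by (rule v(3))
  qed
  have fm: "f k \<in> borel_measurable M" for k
  proof -
    have "(\<lambda>\<omega>. emp_pmf X n \<omega> k - \<pi> k) \<in> borel_measurable M"
      using ve(1)[of k] by (rule borel_measurable_integrable)
    then show ?thesis unfolding f_def by measurable
  qed
  have "emeasure M E = (\<integral>\<^sup>+\<omega>. indicator E \<omega> \<partial>M)" using E by simp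
  also have "\<dots> \<le> (\<integral>\<^sup>+\<omega>. (\<integral>\<^sup>+k. f k \<omega> \<partial>count_space UNIV) \<partial>M)"
  proof (rule nn_integral_mono)
    fix \<omega> assume "\<omega> \<in> space M"
    show "indicator E \<omega> \<le> (\<integral>\<^sup>+k. f k \<omega> \<partial>count_space UNIV)"
    proof (cases "\<omega> \<in> E")
      case True
      then have "lp_dist p (emp_pmf X n \<omega>) \<pi> > t" unfolding E_def by simp
      then obtain F where F: "finite F" "(\<Sum>k\<in>F. \<bar>emp_pmf X n \<omega> k - \<pi> k\<bar>) > t"
        using lp_le[OF p, of "emp_pmf X n \<omega>" \<pi> t] by (meson not_le)
      have "ennreal 1 \<le> ennreal ((\<Sum>k\<in>F. \<bar>emp_pmf X n \<omega> k - \<pi> k\<bar>) / t)"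
        using F t by (intro ennreal_leI) (simp add: le_divide_eq)
      also have "\<dots> = (\<Sum>k\<in>F. f k \<omega>)"
        unfolding f_def using t by (simp add: sum_divide_distrib)
      also have "\<dots> = (\<integral>\<^sup>+k. f k \<omega> * indicator F k \<partial>count_space UNIV)"
        using F by (subst nn_integral_indicator_finite) auto
      also have "\<dots> \<le> (\<integral>\<^sup>+k. f k \<omega> \<partial>count_space UNIV)"
        by (intro nn_integral_mono) (auto simp: indicator_def)
      finally show ?thesis using True by simp
    next
      case False then show ?thesis by simp
    qed
  qed
  also have "\<dots> = (\<integral>\<^sup>+k. (\<integral>\<^sup>+\<omega>. f k \<omega> \<partial>M) \<partial>count_space UNIV)"
    by (rule nn_integral_count_space_nn_integral) (simp_all add: fm)
  also have "\<dots> \<le> (\<integral>\<^sup>+k. ennreal (sqrt (\<pi> k) * (1 / C)) \<partial>count_space UNIV)"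
  proof (rule nn_integral_mono)
    fix k :: 'k
    define d where "d \<omega> = emp_pmf X n \<omega> k - \<pi> k" for \<omega>
    have i1: "integrable M d" "integrable M (\<lambda>\<omega>. (d \<omega>)\<^sup>2)" using ve(1,2)[of k] by (simp_all add: d_def[abs_def])
    have "(\<integral>\<^sup>+\<omega>. f k \<omega> \<partial>M) = ennreal (expectation (\<lambda>\<omega>. \<bar>d \<omega>\<bar> / t))"
      unfolding f_def d_def[symmetric] using i1 t by (intro nn_integral_eq_integral) auto
    also have "\<dots> = ennreal (expectation (\<lambda>\<omega>. \<bar>d \<omega>\<bar>) / t)" by simp
    also have "\<dots> \<le> ennreal (sqrt (\<pi> k / n) / t)"
    proof (intro ennreal_leI divide_right_mono)
      have "expectation (\<lambda>\<omega>. \<bar>d \<omega>\<bar>) \<le> sqrt (expectation (\<lambda>\<omega>. (d \<omega>)\<^sup>2))"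
        by (rule abs_exp_le[OF i1])
      also have "\<dots> \<le> sqrt (\<pi> k / n)"
        using ve(3)[of k] by (simp add: d_def)
      finally show "expectation (\<lambda>\<omega>. \<bar>d \<omega>\<bar>) \<le> sqrt (\<pi> k / n)" .
    qed (use t in simp)
    also have "sqrt (\<pi> k / n) / t = sqrt (\<pi> k) * (1 / C)"
      using n C by (simp add: t_def real_sqrt_divide)
    finally show "(\<integral>\<^sup>+\<omega>. f k \<omega> \<partial>M) \<le> ennreal (sqrt (\<pi> k) * (1 / C))" .
  qed
  also have "\<dots> = ennreal (infsum (\<lambda>k. sqrt (\<pi> k)) UNIV / C)"
  proof -
    have eq: "\<And>f::_\<Rightarrow>real. \<And>A. f summable_on A \<longleftrightarrow> Infinite_Set_Sum.abs_summable_on f A"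
      by (rule trans[OF summable_on_iff_abs_summable_on_real abs_summable_equivalent])
    have s2: "(\<lambda>k. sqrt (\<pi> k) * (1 / C)) summable_on UNIV"
      by (rule summable_on_cmult_left[OF summ])
    have "(\<integral>\<^sup>+k. ennreal (sqrt (\<pi> k) * (1 / C)) \<partial>count_space UNIV)
        = ennreal (infsetsum (\<lambda>k. sqrt (\<pi> k) * (1 / C)) UNIV)"
      using eq[THEN iffD1, OF s2] C pi0 by (intro nn_integral_conv_infsetsum) (simp_all add: less_imp_le)
    also have "infsetsum (\<lambda>k. sqrt (\<pi> k) * (1 / C)) UNIV = infsum (\<lambda>k. sqrt (\<pi> k) * (1 / C)) UNIV"
      using eq[THEN iffD1, OF s2] by (rule infsetsum_infsum)
    also have "\<dots> = infsum (\<lambda>k. sqrt (\<pi> k)) UNIV * (1 / C)"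
      using summ by (rule infsum_cmult_left)
    finally show ?thesis by simp
  qed
  finally show ?thesis unfolding E_def t_def .
qed

end

theorem proposition2:
  fixes b :: "nat \<Rightarrow> real"
    and Q0 :: "(real ^ 'd::finite) measure"
  assumes b_pos: "\<And>k. b k > 0"
    and R_pos: "conv_radius b > 0"
    and Q0_prob: "prob_space Q0"
    and Q0_sets: "sets Q0 = sets borel"
    and A1: "(\<forall>r. conv_radius b = ereal r \<longrightarrow>
               (\<exists>q0. 0 < q0 \<and> q0 < 1 \<and>
                  msupp Q0 \<subseteq> {\<theta>. \<forall>j. 0 \<le> \<theta> $ j \<and> \<theta> $ j \<le> q0 * r}))
           \<and> (conv_radius b = \<infinity> \<longrightarrow>
               (\<exists>M>0. msupp Q0 \<subseteq> {\<theta>. \<forall>j. 0 \<le> \<theta> $ j \<and> \<theta> $ j \<le> M}))"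
    and A2: "(measure Q0 {0} > 0 \<longrightarrow>
               (\<exists>\<eta>0 \<delta>0. 0 < \<eta>0 \<and> \<eta>0 < 1 \<and> 0 < \<delta>0 \<and> ereal \<delta>0 < conv_radius b \<and>
                  measure Q0 {0} \<le> 1 - \<eta>0 \<and>
                  msupp Q0 \<inter> {\<theta>. \<exists>j. 0 < \<theta> $ j \<and> \<theta> $ j < \<delta>0} = {}))
           \<and> (measure Q0 {0} = 0 \<longrightarrow>
               (\<exists>\<delta>0. 0 < \<delta>0 \<and> ereal \<delta>0 < conv_radius b \<and>
                  msupp Q0 \<inter> {\<theta>. \<exists>j. 0 < \<theta> $ j \<and> \<theta> $ j < \<delta>0} = {}))"
    and A3: "\<exists>V::nat. \<forall>k\<ge>V. b k / b 0 \<ge> inverse (real k ^ k)"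
    and A4: "\<exists>L. (\<lambda>k. b (Suc k) / b k) \<longlonglongrightarrow> L"
  shows "(\<lambda>k. sqrt (pi_mix b Q0 k)) summable_on UNIV
    \<and> (\<forall>(M :: 'a measure) (X :: nat \<Rightarrow> 'a \<Rightarrow> ('d \<Rightarrow> nat)) (p :: ereal).
          prob_space M
          \<and> prob_space.indep_vars M (\<lambda>_. count_space UNIV) X UNIV
          \<and> (\<forall>i. distr M (count_space UNIV) (X i)
                   = density (count_space UNIV) (\<lambda>k. ennreal (pi_mix b Q0 k)))
          \<and> 1 \<le> p
        \<longrightarrow> (\<forall>\<epsilon>>0. \<exists>C N. \<forall>n\<ge>N. n \<ge> 1 \<and>
               {\<omega> \<in> space M. lp_dist p (emp_pmf X n \<omega>) (pi_mix b Q0) > C / sqrt (real n)} \<in> sets M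
             \<and> measure M {\<omega> \<in> space M. lp_dist p (emp_pmf X n \<omega>) (pi_mix b Q0) > C / sqrt (real n)} < \<epsilon>))"
  proof -
  obtain \<rho> where r0: "0 \<le> \<rho>" and r: "ereal \<rho> < conv_radius b"
    and AE: "AE \<theta> in Q0. \<forall>j. 0 \<le> \<theta> $ j \<and> \<theta> $ j \<le> \<rho>"
    using get_rho[OF R_pos Q0_sets A1] by blast
  define \<pi> where "\<pi> = pi_mix b Q0"
  have pi0: "\<And>k. 0 \<le> \<pi> k" unfolding \<pi>_def using pi_bounds(1)[OF b_pos Q0_prob AE r r0] by blast
  have summ: "(\<lambda>k. sqrt (\<pi> k)) summable_on UNIV"
    unfolding \<pi>_def by (rule part1[OF b_pos Q0_prob AE r r0])
  define S where "S = infsum (\<lambda>k. sqrt (\<pi> k)) UNIV"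
  have S0: "0 \<le> S" unfolding S_def using pi0 by (intro infsum_nonneg) auto
  have part2: "\<forall>\<epsilon>>0. \<exists>C N. \<forall>n\<ge>N. n \<ge> 1 \<and>
               {\<omega> \<in> space M. lp_dist p (emp_pmf X n \<omega>) \<pi> > C / sqrt (real n)} \<in> sets M
             \<and> measure M {\<omega> \<in> space M. lp_dist p (emp_pmf X n \<omega>) \<pi> > C / sqrt (real n)} < \<epsilon>"
    if M: "prob_space M" and ind: "prob_space.indep_vars M (\<lambda>_. count_space UNIV) X UNIV"
      and dist: "\<forall>i. distr M (count_space UNIV) (X i) = density (count_space UNIV) (\<lambda>k. ennreal (\<pi> k))"
      and p: "1 \<le> p"
    for M :: "'a measure" and X :: "nat \<Rightarrow> 'a \<Rightarrow> ('d \<Rightarrow> nat)" and p :: ereal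
  proof -
    interpret Mp: prob_space M by (rule M)
    have Xm: "\<And>i. X i \<in> measurable M (count_space UNIV)"
      using ind unfolding Mp.indep_vars_def2 by auto
    have PX: "Mp.prob (X i -` {k} \<inter> space M) = \<pi> k" for i k
    proof -
      have "emeasure M (X i -` {k} \<inter> space M) = emeasure (distr M (count_space UNIV) (X i)) {k}"
        by (rule emeasure_distr[symmetric]) (use Xm in auto)
      also have "\<dots> = emeasure (density (count_space UNIV) (\<lambda>k. ennreal (\<pi> k))) {k}"
        using dist by simp
      also have "\<dots> = ennreal (\<pi> k)"
        by (subst emeasure_density) auto
      finally show ?thesis using pi0[of k] by (simp add: Mp.emeasure_eq_measure)
    qed
    have PXX: "Mp.prob ((X i -` {k} \<inter> space M) \<inter> (X j -` {k} \<inter> space M)) = (\<pi> k)^2"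
      if ij: "i \<noteq> j" for i j k
    proof -
      have iset: "Mp.indep_sets (\<lambda>i. {X i -` A \<inter> space M | A. A \<in> sets (count_space UNIV)}) UNIV"
        using ind unfolding Mp.indep_vars_def2 by auto
      have "Mp.prob (\<Inter>l\<in>{i, j}. X l -` {k} \<inter> space M) = (\<Prod>l\<in>{i, j}. Mp.prob (X l -` {k} \<inter> space M))"
        by (rule Mp.indep_setsD[OF iset]) auto
      then show ?thesis using ij by (simp add: PX power2_eq_square)
    qed
    show ?thesis
    proof (intro allI impI)
      fix \<epsilon> :: real assume e: "\<epsilon> > 0"
      define C where "C = (S + 1) / \<epsilon>"
      have C: "C > 0" using e S0 by (simp add: C_def)
      have SC: "S / C < \<epsilon>" using e S0 by (simp add: C_def field_simps)
      show "\<exists>C N. \<forall>n\<ge>N. n \<ge> 1 \<and>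
               {\<omega> \<in> space M. lp_dist p (emp_pmf X n \<omega>) \<pi> > C / sqrt (real n)} \<in> sets M
             \<and> measure M {\<omega> \<in> space M. lp_dist p (emp_pmf X n \<omega>) \<pi> > C / sqrt (real n)} < \<epsilon>"
      proof (intro exI allI impI conjI)
        fix n :: nat assume n: "1 \<le> n"
        show "1 \<le> n" by fact
        show "{\<omega> \<in> space M. lp_dist p (emp_pmf X n \<omega>) \<pi> > C / sqrt (real n)} \<in> sets M"
          by (rule emp_event_meas[OF Xm])
        have "ennreal (measure M {\<omega> \<in> space M. lp_dist p (emp_pmf X n \<omega>) \<pi> > C / sqrt (real n)})
            \<le> ennreal (S / C)"
          using Mp.main_bound[OF Xm PX PXX pi0 summ p n C] unfolding S_def
          by (simp add: Mp.emeasure_eq_measure)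
        then have "measure M {\<omega> \<in> space M. lp_dist p (emp_pmf X n \<omega>) \<pi> > C / sqrt (real n)} \<le> S / C"
          using S0 C by (simp add: ennreal_le_iff)
        then show "measure M {\<omega> \<in> space M. lp_dist p (emp_pmf X n \<omega>) \<pi> > C / sqrt (real n)} < \<epsilon>"
          using SC by linarith
      qed
    qed
  qed
  show ?thesis using summ part2 unfolding \<pi>_def by blast
qed

end
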